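(* Let $\tau>\frac{3+\sqrt{17}}{2}$. Then for (Lebesgue) almost every $\gamma>0$, the set $D_{\gamma,\tau}$ is a Cantor set.
   Context: For $x\in\mathbb{R}$, $\|x\|:=\min_{p\in\mathbb{Z}}|x-p|$. Let $\mathbb{N}=\{1,2,3,\dots\}$. For $\gamma>0$ and $\tau\ge 1$, $D_{\gamma,\tau}:=\{\alpha\in(0,1):\ \|q\alpha\|\ge \gamma/q^{\tau}\ \text{for all } q\in\mathbb{N}\}$. A set $X\subset\mathbb{R}$ is a Cantor set if it is closed, totally disconnected and perfect (every point of $X$ is an accumulation point of $X$). *)

theory Defs
  imports "HOL-Analysis.Analysis"
begin

definition dist_int :: "real \<Rightarrow> real" where
  "dist_int x = (INF p::int. \<bar>x - real_of_int p\<bar>)"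

definition Dset :: "real \<Rightarrow> real \<Rightarrow> real set" where
  "Dset \<gamma> \<tau> = {\<alpha>. 0 < \<alpha> \<and> \<alpha> < 1 \<and>
      (\<forall>q::nat. q \<ge> 1 \<longrightarrow> dist_int (real q * \<alpha>) \<ge> \<gamma> / (real q powr \<tau>))}"

definition totally_disconnected :: "real set \<Rightarrow> bool" where
  "totally_disconnected X \<longleftrightarrow> (\<forall>S. S \<subseteq> X \<and> connected S \<longrightarrow> (\<exists>a. S \<subseteq> {a}))"

definition perfect_set :: "real set \<Rightarrow> bool" where
  "perfect_set X \<longleftrightarrow> (\<forall>x\<in>X. x islimpt X)"

definition cantor_set :: "real set \<Rightarrow> bool" where
  "cantor_set X \<longleftrightarrow> closed X \<and> totally_disconnected X \<and> perfect_set X"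

end

theory Submission
  imports Defs
begin

lemma dist_int_ge: "r \<le> dist_int y \<longleftrightarrow> (\<forall>p::int. r \<le> \<bar>y - real_of_int p\<bar>)"
proof -
  have bdd: "bdd_below ((\<lambda>p::int. \<bar>y - real_of_int p\<bar>) ` UNIV)"
    by (rule bdd_belowI2[where m=0]) simp
  show ?thesis unfolding dist_int_def
    using le_cINF_iff[OF UNIV_not_empty bdd, of r] by simp
qed

lemma dist_int_less: "dist_int y < r \<longleftrightarrow> (\<exists>p::int. \<bar>y - real_of_int p\<bar> < r)"
proof -
  have "dist_int y < r \<longleftrightarrow> \<not> r \<le> dist_int y" by (simp add: not_le)
  also have "\<dots> \<longleftrightarrow> (\<exists>p::int. \<bar>y - real_of_int p\<bar> < r)" unfolding dist_int_ge by (simp add: not_le)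
  finally show ?thesis .
qed

lemma Dset_alt:
  assumes "\<gamma> > 0"
  shows "Dset \<gamma> \<tau> = {\<alpha>. 0 \<le> \<alpha> \<and> \<alpha> \<le> 1 \<and> (\<forall>q::nat. q \<ge> 1 \<longrightarrow> (\<forall>p::int. \<gamma> / (real q powr \<tau>) \<le> \<bar>real q * \<alpha> - real_of_int p\<bar>))}"
proof -
  have "\<alpha> \<noteq> 0" if "\<forall>q::nat. q \<ge> 1 \<longrightarrow> (\<forall>p::int. \<gamma> / (real q powr \<tau>) \<le> \<bar>real q * \<alpha> - real_of_int p\<bar>)" for \<alpha>
    using that[rule_format, of 1 0] assms by auto
  moreover have "\<alpha> \<noteq> 1" if "\<forall>q::nat. q \<ge> 1 \<longrightarrow> (\<forall>p::int. \<gamma> / (real q powr \<tau>) \<le> \<bar>real q * \<alpha> - real_of_int p\<bar>)" for \<alpha>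
    using that[rule_format, of 1 1] assms by auto
  ultimately show ?thesis
    unfolding Dset_def dist_int_ge by force
qed

lemma Dset_closed:
  assumes "\<gamma> > 0"
  shows "closed (Dset \<gamma> \<tau>)"
proof -
  have "Dset \<gamma> \<tau> = {0..1} \<inter> (\<Inter>q\<in>{q::nat. q \<ge> 1}. \<Inter>p::int. {\<alpha>. \<gamma> / (real q powr \<tau>) \<le> \<bar>real q * \<alpha> - real_of_int p\<bar>})"
    unfolding Dset_alt[OF assms] by auto
  also have "closed \<dots>"
    by (auto intro!: closed_Int closed_INT closed_Collect_le continuous_intros)
  finally show ?thesis .
qed

lemma Dset_sub01: "Dset \<gamma> \<tau> \<subseteq> {0<..<1}"
  unfolding Dset_def by auto

lemma Dset_no_rat:
  assumes "\<gamma> > 0" "q \<ge> 1"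
  shows "real_of_int p / real q \<notin> Dset \<gamma> \<tau>"
proof
  assume "real_of_int p / real q \<in> Dset \<gamma> \<tau>"
  then have "\<gamma> / (real q powr \<tau>) \<le> \<bar>real q * (real_of_int p / real q) - real_of_int p\<bar>"
    unfolding Dset_alt[OF assms(1)] using assms(2) by blast
  moreover have "real q * (real_of_int p / real q) = real_of_int p" using assms(2) by simp
  moreover have "\<gamma> / (real q powr \<tau>) > 0" using assms by simp
  ultimately show False by simp
qed

lemma Dset_tot_disc:
  assumes "\<gamma> > 0"
  shows "totally_disconnected (Dset \<gamma> \<tau>)"
  unfolding totally_disconnected_def
proof (intro allI impI)
  fix S assume S: "S \<subseteq> Dset \<gamma> \<tau> \<and> connected S"
  show "\<exists>a. S \<subseteq> {a}"
  proof (rule ccontr)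
    assume "\<not> (\<exists>a. S \<subseteq> {a})"
    then obtain a b where ab: "a \<in> S" "b \<in> S" "a < b"
      by (metis insertI1 linorder_neqE_linordered_idom subsetI)
    obtain r where r: "r \<in> \<rat>" "a < r" "r < b" using Rats_dense_in_real ab(3) by blast
    then obtain p d :: int where pb: "d > 0" "r = real_of_int p / real_of_int d"
      by (metis Rats_cases')
    define q where "q = nat d"
    have pq: "q \<ge> 1" "r = real_of_int p / real q" using pb unfolding q_def by auto
    have "r \<in> S" using S ab r connected_contains_Icc[of S a b] by auto
    with S pq assms Dset_no_rat[of \<gamma> q p \<tau>] show False by auto
  qed
qed

lemma Dset_mono:
  assumes "g1 \<le> g2"
  shows "Dset g2 \<tau> \<subseteq> Dset g1 \<tau>"
  unfolding Dset_def
proof (safe)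
  fix x and q :: nat assume "\<forall>q::nat. 1 \<le> q \<longrightarrow> g2 / real q powr \<tau> \<le> dist_int (real q * x)" "1 \<le> q"
  then have "g2 / real q powr \<tau> \<le> dist_int (real q * x)" by blast
  moreover have "g1 / real q powr \<tau> \<le> g2 / real q powr \<tau>"
    using assms \<open>1 \<le> q\<close> by (simp add: divide_right_mono)
  ultimately show "g1 / real q powr \<tau> \<le> dist_int (real q * x)" by linarith
qed

lemma sum_inv_sq:
  fixes M :: nat
  assumes "M \<ge> 1"
  shows "(\<Sum>q<n. (if M \<le> q then 1 / (real q)^2 else 0)) \<le> 2 / real M - 2 / real (max n M)"
proof (induction n)
  case 0
  then show ?case using assms by simp
next
  case (Suc n)
  show ?case
  proof (cases "M \<le> n")
    case True
    have n1: "real n \<ge> 1" using True assms by simp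
    have e: "2 / real n - 2 / real (Suc n) = 2 / (real n * (real n + 1))"
      using n1 by (simp add: field_simps)
    have "1 / (real n)^2 = 2 / (2 * real n * real n)" using n1 by (simp add: power2_eq_square)
    also have "\<dots> \<le> 2 / (real n * (real n + 1))"
    proof (rule divide_left_mono)
      show "real n * (real n + 1) \<le> 2 * real n * real n" using n1 by (simp add: algebra_simps)
      show "0 < 2 * real n * real n * (real n * (real n + 1))" using n1 by (intro mult_pos_pos) auto
    qed simp
    finally have "1 / (real n)^2 \<le> 2 / real n - 2 / real (Suc n)" using e by simp
    moreover have "max n M = n" "max (Suc n) M = Suc n" using True by auto
    ultimately show ?thesis using Suc True by simp
  next
    case False
    then have "max n M = M" "max (Suc n) M = M" by auto
    then show ?thesis using Suc False by simp
  qed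
qed

lemma card_int_interval:
  fixes a L :: real
  assumes "L \<ge> 0"
  shows "finite {p::int. a < real_of_int p \<and> real_of_int p < a + L}"
    "real (card {p::int. a < real_of_int p \<and> real_of_int p < a + L}) \<le> L + 1"
proof -
  let ?S = "{p::int. a < real_of_int p \<and> real_of_int p < a + L}"
  have sub: "?S \<subseteq> {\<lfloor>a\<rfloor> + 1 .. \<lceil>a + L\<rceil> - 1}"
  proof
    fix p assume "p \<in> ?S"
    then have "a < p" "p < a + L" by auto
    then have "\<lfloor>a\<rfloor> < p" "p < \<lceil>a + L\<rceil>"
      by (simp_all add: floor_less_iff less_ceiling_iff)
    then show "p \<in> {\<lfloor>a\<rfloor> + 1 .. \<lceil>a + L\<rceil> - 1}" by auto
  qed
  then show "finite ?S" using finite_subset by blast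
  have "card ?S \<le> card {\<lfloor>a\<rfloor> + 1 .. \<lceil>a + L\<rceil> - 1}" using sub by (intro card_mono) auto
  also have "\<dots> = nat (\<lceil>a + L\<rceil> - 1 - \<lfloor>a\<rfloor>)" by simp
  finally have "real (card ?S) \<le> real (nat (\<lceil>a + L\<rceil> - 1 - \<lfloor>a\<rfloor>))" by linarith
  also have "\<dots> \<le> L + 1"
  proof -
    have "real_of_int \<lceil>a + L\<rceil> < a + L + 1" by linarith
    moreover have "real_of_int \<lfloor>a\<rfloor> > a - 1" by linarith
    moreover have "real_of_int (\<lceil>a + L\<rceil> - 1 - \<lfloor>a\<rfloor>) = real_of_int \<lceil>a + L\<rceil> - 1 - real_of_int \<lfloor>a\<rfloor>" by simp
    ultimately have "real_of_int (\<lceil>a + L\<rceil> - 1 - \<lfloor>a\<rfloor>) \<le> L + 1" by linarith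
    then show ?thesis using assms by (cases "\<lceil>a + L\<rceil> - 1 - \<lfloor>a\<rfloor> \<ge> 0") (auto simp: of_nat_nat)
  qed
  finally show "real (card ?S) \<le> L + 1" .
qed

lemma term_bound:
  fixes N q g1 \<tau> :: real
  assumes N1: "N \<ge> 1" and Nq: "N < q" and \<tau>: "\<tau> > 2" and g1: "g1 > 0"
  shows "(q * (1 / N^2) + 1) * (2 * (g1 / q powr (\<tau> + 1))) \<le> (4 * g1 * N / N powr \<tau>) * (1 / q^2)"
proof -
  have q0: "q > 0" using N1 Nq by linarith
  define A where "A = q powr (\<tau> - 2)"
  define a where "a = N powr (\<tau> - 2)"
  have a0: "a > 0" unfolding a_def using N1 by simp
  have Aa: "a \<le> A" unfolding a_def A_def using N1 Nq \<tau> by (intro powr_mono2) auto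
  have qp: "q powr (\<tau> + 1) = A * q^3"
  proof -
    have "q powr (\<tau> + 1) = q powr ((\<tau> - 2) + 3)" by (rule arg_cong[where f="\<lambda>x. q powr x"]) simp
    also have "\<dots> = A * q powr 3" unfolding A_def by (rule powr_add)
    also have "q powr 3 = q^3" using q0 by (simp add: powr_realpow)
    finally show ?thesis .
  qed
  have Np: "N powr \<tau> = a * N^2"
  proof -
    have "N powr \<tau> = N powr ((\<tau> - 2) + 2)" by (rule arg_cong[where f="\<lambda>x. N powr x"]) simp
    also have "\<dots> = a * N powr 2" unfolding a_def by (rule powr_add)
    also have "N powr 2 = N^2" using N1 by (simp add: powr_realpow)
    finally show ?thesis .
  qed
  have "(q * (1 / N^2) + 1) * (2 * (g1 / q powr (\<tau> + 1))) = 2 * g1 * (q + N^2) / (N^2 * A * q^3)"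
    unfolding qp using N1 q0 by (simp add: field_simps)
  also have "\<dots> \<le> 2 * g1 * (q + N^2) / (N^2 * a * q^3)"
    using a0 Aa q0 N1 g1 by (intro divide_left_mono mult_mono mult_pos_pos) auto
  also have "\<dots> \<le> 2 * g1 * (2 * N * q) / (N^2 * a * q^3)"
  proof -
    have a1: "N * N \<le> N * q" using N1 Nq by (intro mult_left_mono) auto
    have a2: "1 * q \<le> N * q" using N1 Nq by (intro mult_right_mono) auto
    have "q + N^2 \<le> 2 * N * q" using a1 a2 by (simp add: power2_eq_square)
    then show ?thesis using g1 a0 q0 N1 by (intro divide_right_mono) auto
  qed
  also have "\<dots> = (4 * g1 * N / N powr \<tau>) * (1 / q^2)"
    unfolding Np using N1 q0 a0 by (simp add: field_simps power2_eq_square power3_eq_cube)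
  finally show ?thesis .
qed

lemma key:
  fixes \<tau> g1 g2 \<alpha> \<epsilon> :: real
  assumes \<tau>: "\<tau> > 2" and g1: "0 < g1" and g12: "g1 < g2" and \<epsilon>: "\<epsilon> > 0"
  and H1: "\<And>x. \<alpha> < x \<Longrightarrow> x < \<alpha> + \<epsilon> \<Longrightarrow>
      \<exists>q::nat. q \<ge> 1 \<and> (\<exists>p::int. \<bar>x - real_of_int p / real q\<bar> < g1 / real q powr (\<tau>+1))"
  and H2: "\<And>(q::nat) (p::int). q \<ge> 1 \<Longrightarrow> g2 / real q powr (\<tau>+1) \<le> \<bar>\<alpha> - real_of_int p / real q\<bar>"
  shows False
proof -
  define c where "c = g2 - g1"
  define K where "K = g2 / c"
  define C0 where "C0 = 8 * K * g1 * (1 + 2 * g1 / c)"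
  have c: "c > 0" unfolding c_def using g12 by simp
  have K: "K > 0" unfolding K_def using c g1 g12 by simp
  have Kc: "K = 1 + g1 / c" unfolding K_def c_def using c c_def by (simp add: field_simps)
  have C0: "C0 > 0" unfolding C0_def using K g1 c
    by (intro mult_pos_pos add_pos_nonneg) auto
  define N where "N = max 1 (max (sqrt (1 / (K * \<epsilon>))) ((C0 + 1) powr (1 / (\<tau> - 2))))"
  have N1: "N \<ge> 1" unfolding N_def by simp
  have NC: "N powr (\<tau> - 2) > C0"
  proof -
    have "(C0 + 1) powr (1 / (\<tau> - 2)) \<le> N" unfolding N_def by simp
    then have "((C0 + 1) powr (1 / (\<tau> - 2))) powr (\<tau> - 2) \<le> N powr (\<tau> - 2)"
      using \<tau> by (intro powr_mono2) auto
    moreover have "((C0 + 1) powr (1 / (\<tau> - 2))) powr (\<tau> - 2) = C0 + 1"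
      using \<tau> C0 by (simp add: powr_powr)
    ultimately show ?thesis by simp
  qed
  define t where "t = 1 / (K * N^2)"
  have t0: "t > 0" unfolding t_def using K N1 by simp
  have t\<epsilon>: "t \<le> \<epsilon>"
  proof -
    have "sqrt (1 / (K * \<epsilon>)) \<le> N" unfolding N_def by simp
    then have "(sqrt (1 / (K * \<epsilon>)))^2 \<le> N^2" using K \<epsilon> by (intro power_mono) auto
    then have "1 / (K * \<epsilon>) \<le> N^2" using K \<epsilon> by simp
    then have "1 \<le> N^2 * (K * \<epsilon>)" using K \<epsilon> by (simp add: field_simps)
    then show ?thesis unfolding t_def using K N1 \<epsilon> by (simp add: field_simps)
  qed
  have Kt: "K * t = 1 / N^2" unfolding t_def using K by simp
  define w where "w q = g1 / real q powr (\<tau>+1)" for q :: nat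
  define rel where "rel p q \<longleftrightarrow> q \<ge> 1 \<and> (\<exists>x. \<alpha> < x \<and> x < \<alpha> + t \<and> \<bar>x - real_of_int p / real q\<bar> < w q)"
    for p :: int and q :: nat
  have rel_facts: "\<alpha> + c / real q powr (\<tau>+1) \<le> real_of_int p / real q - w q \<and> c / real q powr (\<tau>+1) < t
     \<and> real_of_int p / real q < \<alpha> + K * t \<and> \<alpha> < real_of_int p / real q"
    if "rel p q" for p q
  proof -
    from that obtain x where q1: "q \<ge> 1" and x: "\<alpha> < x" "x < \<alpha> + t" "\<bar>x - real_of_int p / real q\<bar> < w q"
      unfolding rel_def by blast
    define f where "f = real_of_int p / real q"
    define P where "P = real q powr (\<tau>+1)"
    have P: "P > 0" unfolding P_def using q1 by simp
    have h2: "g2 / P \<le> \<bar>\<alpha> - f\<bar>" unfolding P_def f_def using H2[OF q1] .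
    have wP: "w q = g1 / P" unfolding w_def P_def ..
    have lt: "g1 / P < g2 / P" using P g12 by (simp add: divide_strict_right_mono)
    have xf: "\<bar>x - f\<bar> < g1 / P" using x(3) wP f_def by simp
    have af: "\<alpha> < f"
    proof (rule ccontr)
      assume "\<not> \<alpha> < f"
      then have "\<bar>\<alpha> - f\<bar> \<le> \<bar>x - f\<bar>" using x(1) by auto
      then show False using h2 xf lt by linarith
    qed
    have f1: "f - \<alpha> \<ge> g2 / P" using h2 af by auto
    have cP: "c / P = g2 / P - g1 / P" unfolding c_def by (simp add: diff_divide_distrib)
    have f2: "f < \<alpha> + t + g1 / P" using xf x(2) by auto
    have ct: "c / P < t" using f1 f2 cP by linarith
    have "g1 / P = (g1 / c) * (c / P)" using c by simp
    also have "\<dots> \<le> (g1 / c) * t" using ct g1 c by (intro mult_left_mono) auto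
    finally have "f < \<alpha> + t + (g1 / c) * t" using f2 by linarith
    then have f3: "f < \<alpha> + K * t" unfolding Kc by (simp add: algebra_simps)
    show ?thesis using f1 cP ct f3 af wP unfolding f_def[symmetric] P_def[symmetric] by simp
  qed
  have special_eq: "real_of_int p / real q = real_of_int p' / real q'"
    if "rel p q" "rel p' q'" "real q \<le> N" "real q' \<le> N" for p p' q q'
  proof (rule ccontr)
    assume ne: "real_of_int p / real q \<noteq> real_of_int p' / real q'"
    have q1: "q \<ge> 1" "q' \<ge> 1" using that unfolding rel_def by auto
    have "p * int q' \<noteq> p' * int q"
    proof
      assume "p * int q' = p' * int q"
      then have "real_of_int p * real q' = real_of_int p' * real q"
        by (metis of_int_mult of_int_of_nat_eq)
      then show False using ne q1 by (simp add: field_simps)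
    qed
    then have one: "1 \<le> \<bar>real_of_int (p * int q' - p' * int q)\<bar>" by linarith
    have "real_of_int p / real q - real_of_int p' / real q' = real_of_int (p * int q' - p' * int q) / (real q * real q')"
      using q1 by (simp add: field_simps)
    then have "\<bar>real_of_int p / real q - real_of_int p' / real q'\<bar> = \<bar>real_of_int (p * int q' - p' * int q)\<bar> / (real q * real q')"
      by simp
    also have "\<dots> \<ge> 1 / (real q * real q')"
      using one q1 by (intro divide_right_mono) auto
    finally have A: "\<bar>real_of_int p / real q - real_of_int p' / real q'\<bar> \<ge> 1 / (real q * real q')" .
    have "real q * real q' \<le> N^2" using that q1 by (simp add: power2_eq_square mult_mono)
    then have "1 / (real q * real q') \<ge> 1 / N^2" using q1 N1 by (intro divide_left_mono mult_pos_pos) auto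
    with A have B: "\<bar>real_of_int p / real q - real_of_int p' / real q'\<bar> \<ge> K * t" unfolding Kt by linarith
    have "\<bar>real_of_int p / real q - real_of_int p' / real q'\<bar> < K * t"
      using rel_facts[OF that(1)] rel_facts[OF that(2)] by linarith
    with B show False by linarith
  qed
  define P where "P q = {p::int. real q * \<alpha> < real_of_int p \<and> real_of_int p < real q * \<alpha> + real q * (K * t)}" for q :: nat
  define I where "I p q = {real_of_int p / real q - w q <..< real_of_int p / real q + w q}" for p :: int and q :: nat
  define Bq where "Bq q = (if N < real q then (\<Union>p\<in>P q. I p q) else {})" for q :: nat
  define B where "B = (\<Union>q. Bq q)"
  have Bq_open: "open (Bq q)" for q unfolding Bq_def I_def by auto
  have B_open: "open B" unfolding B_def using Bq_open by auto
  have cover: "x \<in> B \<or> (\<exists>p q. rel p q \<and> real q \<le> N \<and> \<bar>x - real_of_int p / real q\<bar> < w q)"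
    if xa: "\<alpha> < x" "x < \<alpha> + t" for x
  proof -
    have "\<exists>q::nat. q \<ge> 1 \<and> (\<exists>p::int. \<bar>x - real_of_int p / real q\<bar> < g1 / real q powr (\<tau>+1))"
      using H1[of x] xa t\<epsilon> by simp
    then obtain q p where q1: "q \<ge> 1" and pq: "\<bar>x - real_of_int p / real q\<bar> < w q"
      unfolding w_def by blast
    have r: "rel p q" unfolding rel_def using q1 pq xa by blast
    show ?thesis
    proof (cases "real q \<le> N")
      case True then show ?thesis using r pq by blast
    next
      case False
      have "real_of_int p / real q < \<alpha> + K * t" "\<alpha> < real_of_int p / real q"
        using rel_facts[OF r] by auto
      then have "p \<in> P q" unfolding P_def using q1 by (simp add: field_simps)
      moreover have "x \<in> I p q" unfolding I_def using pq by (auto simp: abs_less_iff)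
      ultimately have "x \<in> Bq q" unfolding Bq_def using False by auto
      then show ?thesis unfolding B_def by blast
    qed
  qed
  have w0: "w q > 0" if "q \<ge> 1" for q unfolding w_def using g1 that by simp
  define gq where "gq q = (if N < real q then (real q * (K * t) + 1) * (2 * w q) else 0)" for q :: nat
  have Bq_meas: "emeasure lborel (Bq q) \<le> ennreal (gq q)" for q
  proof (cases "N < real q")
    case True
    then have q1: "q \<ge> 1" using N1 by simp
    have fin: "finite (P q)" "real (card (P q)) \<le> real q * (K * t) + 1"
      unfolding P_def using card_int_interval[of "real q * (K * t)" "real q * \<alpha>"] K t0 by auto
    have "emeasure lborel (Bq q) = emeasure lborel (\<Union>p\<in>P q. I p q)"
      unfolding Bq_def using True by simp
    also have "\<dots> \<le> (\<Sum>p\<in>P q. emeasure lborel (I p q))"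
      using fin by (intro emeasure_subadditive_finite) (auto simp: I_def)
    also have "\<dots> = (\<Sum>p\<in>P q. ennreal (2 * w q))"
      using w0[OF q1] by (intro sum.cong) (auto simp: I_def)
    also have "\<dots> = ennreal (real (card (P q)) * (2 * w q))"
      using w0[OF q1] by (simp add: ennreal_of_nat_eq_real_of_nat ennreal_mult)
    also have "\<dots> \<le> ennreal (gq q)"
      unfolding gq_def using True fin w0[OF q1] by (intro ennreal_leI) (simp add: mult_right_mono)
    finally show ?thesis .
  next
    case False
    then show ?thesis unfolding Bq_def gq_def by simp
  qed
  define C1 where "C1 = 4 * g1 * N / N powr \<tau>"
  have C1: "C1 \<ge> 0" unfolding C1_def using g1 N1 by simp
  define M where "M = nat \<lfloor>N\<rfloor> + 1"
  have M1: "M \<ge> 1" unfolding M_def by simp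
  have MN: "real M > N" unfolding M_def using N1 by linarith
  define h where "h q = (if M \<le> q then 1 / (real q)^2 else 0)" for q :: nat
  have gq_h: "gq q \<le> C1 * h q" for q
  proof (cases "N < real q")
    case True
    then have "M \<le> q" unfolding M_def using N1 by linarith
    then have "C1 * h q = (4 * g1 * N / N powr \<tau>) * (1 / (real q)^2)" unfolding h_def C1_def by simp
    moreover have "gq q = (real q * (1 / N^2) + 1) * (2 * (g1 / real q powr (\<tau> + 1)))"
      unfolding gq_def w_def Kt using True by simp
    ultimately show ?thesis using term_bound[OF N1 True \<tau> g1] by simp
  next
    case False
    then show ?thesis unfolding gq_def h_def using C1 by simp
  qed
  have gq0: "gq q \<ge> 0" for q
    unfolding gq_def using w0[of q] N1 K t0 by (auto intro!: mult_nonneg_nonneg add_nonneg_nonneg)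
  define S where "S = 8 * g1 / N powr \<tau>"
  have sumg: "(\<Sum>q<n. gq q) \<le> S" for n
  proof -
    have "(\<Sum>q<n. gq q) \<le> (\<Sum>q<n. C1 * h q)" by (intro sum_mono gq_h)
    also have "\<dots> = C1 * (\<Sum>q<n. h q)" by (simp add: sum_distrib_left)
    also have "\<dots> \<le> C1 * (2 / real M)"
    proof -
      have "(\<Sum>q<n. h q) \<le> 2 / real M - 2 / real (max n M)"
        unfolding h_def using sum_inv_sq[OF M1] .
      also have "\<dots> \<le> 2 / real M" using M1 by simp
      finally show ?thesis using C1 by (intro mult_left_mono) auto
    qed
    also have "\<dots> \<le> C1 * (2 / N)"
      using MN N1 C1 by (intro mult_left_mono divide_left_mono) auto
    also have "\<dots> = S" unfolding C1_def S_def using N1 by (simp add: field_simps)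
    finally show ?thesis .
  qed
  have muB: "emeasure lborel B \<le> ennreal S"
  proof -
    have "emeasure lborel B \<le> (\<Sum>q. emeasure lborel (Bq q))"
      unfolding B_def using Bq_open by (intro emeasure_subadditive_countably) auto
    also have "\<dots> \<le> ennreal S"
    proof (intro suminf_le_const summableI)
      fix n
      have "(\<Sum>q<n. emeasure lborel (Bq q)) \<le> (\<Sum>q<n. ennreal (gq q))"
        by (intro sum_mono Bq_meas)
      also have "\<dots> = ennreal (\<Sum>q<n. gq q)" using gq0 by simp
      also have "\<dots> \<le> ennreal S" using sumg by (intro ennreal_leI) auto
      finally show "(\<Sum>q<n. emeasure lborel (Bq q)) \<le> ennreal S" .
    qed
    finally show ?thesis .
  qed
  have S0: "S \<ge> 0" unfolding S_def using g1 N1 by simp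
  have B_meas: "B \<in> sets lborel" using B_open by simp
  have sub_le: "b - a \<le> S" if "a \<le> b" "{a<..<b} \<subseteq> B" for a b
  proof -
    have "ennreal (b - a) = emeasure lborel {a<..<b}" using that by simp
    also have "\<dots> \<le> emeasure lborel B" using that B_meas by (intro emeasure_mono) auto
    also have "\<dots> \<le> ennreal S" by (rule muB)
    finally show ?thesis using S0 by simp
  qed
  have sub_le2: "b - a \<le> (v - u) + S" if "a \<le> b" "u \<le> v" "{a<..<b} \<subseteq> {u<..<v} \<union> B" for a b u v
  proof -
    have "ennreal (b - a) = emeasure lborel {a<..<b}" using that by simp
    also have "\<dots> \<le> emeasure lborel ({u<..<v} \<union> B)" using that B_meas by (intro emeasure_mono) auto
    also have "\<dots> \<le> emeasure lborel {u<..<v} + emeasure lborel B"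
      using B_meas by (intro emeasure_subadditive) auto
    also have "\<dots> \<le> ennreal (v - u) + ennreal S" using that muB by (intro add_mono) auto
    also have "\<dots> = ennreal ((v - u) + S)" using that S0 by (simp add: ennreal_plus)
    finally have "ennreal (b - a) \<le> ennreal ((v - u) + S)" .
    then show ?thesis using S0 that ennreal_le_iff[of "(v - u) + S" "b - a"] by simp
  qed
  have main: "t \<le> (1 + 2 * g1 / c) * S"
  proof (cases "\<exists>q p. rel p q \<and> real q \<le> N")
    case False
    have "{\<alpha><..<\<alpha>+t} \<subseteq> B"
    proof
      fix x assume "x \<in> {\<alpha><..<\<alpha>+t}"
      then have "\<alpha> < x" "x < \<alpha> + t" by auto
      from cover[OF this] show "x \<in> B" using False by blast
    qed
    then have "t \<le> S" using sub_le[of \<alpha> "\<alpha>+t"] t0 by simp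
    moreover have "S \<le> (1 + 2 * g1 / c) * S" using S0 g1 c by (simp add: mult_le_cancel_right1)
    ultimately show ?thesis by linarith
  next
    case True
    define q0 where "q0 = (LEAST q. \<exists>p. rel p q \<and> real q \<le> N)"
    obtain p0 where p0: "rel p0 q0" "real q0 \<le> N"
      using LeastI_ex[OF True] unfolding q0_def by blast
    have least: "q0 \<le> q" if "rel p q" "real q \<le> N" for p q
      unfolding q0_def using that by (intro Least_le) blast
    have q01: "q0 \<ge> 1" using p0 unfolding rel_def by auto
    define v0 where "v0 = real_of_int p0 / real q0"
    define P0 where "P0 = real q0 powr (\<tau>+1)"
    have P0: "P0 > 0" unfolding P0_def using q01 by simp
    define s0 where "s0 = c / P0"
    have rf: "\<alpha> + s0 \<le> v0 - w q0" "s0 < t"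
      using rel_facts[OF p0(1)] unfolding s0_def P0_def v0_def by auto
    have s00: "s0 > 0" unfolding s0_def using c P0 by simp
    have wq0: "w q0 = (g1 / c) * s0" unfolding w_def s0_def P0_def using c by simp
    have spec: "\<bar>x - v0\<bar> < w q0" if "rel p q" "real q \<le> N" "\<bar>x - real_of_int p / real q\<bar> < w q" for x p q
    proof -
      have "real_of_int p / real q = v0" unfolding v0_def using special_eq[OF that(1) p0(1) that(2) p0(2)] .
      moreover have "w q \<le> w q0"
      proof -
        have "q0 \<le> q" using least that by blast
        then have "real q0 powr (\<tau>+1) \<le> real q powr (\<tau>+1)" using q01 \<tau> by (intro powr_mono2) auto
        moreover have "q \<ge> 1" using \<open>q0 \<le> q\<close> q01 by simp
        ultimately show ?thesis unfolding w_def using g1 q01 by (intro divide_left_mono mult_pos_pos) auto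
      qed
      ultimately show ?thesis using that(3) by simp
    qed
    have "{\<alpha><..<\<alpha>+s0} \<subseteq> B"
    proof
      fix x assume x: "x \<in> {\<alpha><..<\<alpha>+s0}"
      then have "\<alpha> < x" "x < \<alpha> + t" using rf by auto
      from cover[OF this] show "x \<in> B"
      proof
        assume "\<exists>p q. rel p q \<and> real q \<le> N \<and> \<bar>x - real_of_int p / real q\<bar> < w q"
        then have "\<bar>x - v0\<bar> < w q0" using spec by blast
        then show "x \<in> B" using x rf by auto
      qed
    qed
    then have A: "s0 \<le> S" using sub_le[of \<alpha> "\<alpha>+s0"] s00 by simp
    have "{\<alpha><..<\<alpha>+t} \<subseteq> {v0 - w q0<..<v0 + w q0} \<union> B"
    proof
      fix x assume x: "x \<in> {\<alpha><..<\<alpha>+t}"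
      then have "\<alpha> < x" "x < \<alpha> + t" by auto
      from cover[OF this] show "x \<in> {v0 - w q0<..<v0 + w q0} \<union> B"
      proof
        assume "\<exists>p q. rel p q \<and> real q \<le> N \<and> \<bar>x - real_of_int p / real q\<bar> < w q"
        then have "\<bar>x - v0\<bar> < w q0" using spec by blast
        then show ?thesis by (auto simp: abs_less_iff)
      qed auto
    qed
    then have "t \<le> 2 * w q0 + S" using sub_le2[of \<alpha> "\<alpha>+t" "v0 - w q0" "v0 + w q0"] t0 w0[OF q01] by simp
    also have "\<dots> = 2 * (g1 / c) * s0 + S" unfolding wq0 by simp
    also have "\<dots> \<le> 2 * (g1 / c) * S + S" using A g1 c by (intro add_mono mult_left_mono) auto
    also have "\<dots> = (1 + 2 * g1 / c) * S" by (simp add: algebra_simps)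
    finally show ?thesis .
  qed
  define a where "a = N powr (\<tau> - 2)"
  have a0: "a > 0" unfolding a_def using N1 by simp
  have Np: "N powr \<tau> = a * N^2"
  proof -
    have "N powr \<tau> = N powr ((\<tau> - 2) + 2)" by (rule arg_cong[where f="\<lambda>x. N powr x"]) simp
    also have "\<dots> = a * N powr 2" unfolding a_def by (rule powr_add)
    also have "N powr 2 = N^2" using N1 by (simp add: powr_realpow)
    finally show ?thesis .
  qed
  have "1 / (K * N^2) \<le> (1 + 2 * g1 / c) * (8 * g1 / (a * N^2))"
    using main unfolding t_def S_def Np .
  then have "a \<le> C0" unfolding C0_def using K a0 N1 c g1 by (simp add: field_simps)
  then show False using NC unfolding a_def by simp
qed

lemma scale_eq:
  fixes x \<gamma> \<tau> :: real and q :: nat and p :: int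
  assumes q: "q \<ge> 1"
  shows "\<gamma> / real q powr (\<tau>+1) = (\<gamma> / real q powr \<tau>) / real q"
    and "\<bar>x - real_of_int p / real q\<bar> = \<bar>real q * x - real_of_int p\<bar> / real q"
proof -
  have "real q powr (\<tau>+1) = real q powr \<tau> * real q" using q by (simp add: powr_add)
  then show "\<gamma> / real q powr (\<tau>+1) = (\<gamma> / real q powr \<tau>) / real q" by simp
  have "x - real_of_int p / real q = (real q * x - real_of_int p) / real q" using q by (simp add: field_simps)
  then show "\<bar>x - real_of_int p / real q\<bar> = \<bar>real q * x - real_of_int p\<bar> / real q" by simp
qed

lemma Gam_sub:
  fixes \<tau> g1 g2 a b :: real
  assumes \<tau>: "\<tau> > 2" and g1: "0 < g1" and g12: "g1 < g2"
    and A1: "Dset g1 \<tau> \<inter> {a<..<b} = {\<alpha>1}" and A2: "Dset g2 \<tau> \<inter> {a<..<b} = {\<alpha>2}"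
  shows False
proof -
  have "\<alpha>2 \<in> Dset g1 \<tau> \<inter> {a<..<b}" using A2 Dset_mono[of g1 g2 \<tau>] g12 by auto
  then have eq: "\<alpha>2 = \<alpha>1" using A1 by auto
  define \<alpha> where "\<alpha> = \<alpha>1"
  have aD: "\<alpha> \<in> Dset g2 \<tau>" "a < \<alpha>" "\<alpha> < b" using A2 eq unfolding \<alpha>_def by auto
  have a01: "0 < \<alpha>" "\<alpha> < 1" using aD(1) unfolding Dset_def by auto
  have g2: "g2 > 0" using g1 g12 by simp
  have H2: "g2 / real q powr (\<tau>+1) \<le> \<bar>\<alpha> - real_of_int p / real q\<bar>" if q: "q \<ge> 1" for q :: nat and p :: int
  proof -
    have "g2 / real q powr \<tau> \<le> \<bar>real q * \<alpha> - real_of_int p\<bar>"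
      using aD(1) q unfolding Dset_alt[OF g2] by blast
    then show ?thesis unfolding scale_eq[OF q] using q by (intro divide_right_mono) auto
  qed
  define \<epsilon> where "\<epsilon> = min (b - \<alpha>) (1 - \<alpha>)"
  have \<epsilon>: "\<epsilon> > 0" unfolding \<epsilon>_def using aD a01 by simp
  have H1: "\<exists>q::nat. q \<ge> 1 \<and> (\<exists>p::int. \<bar>x - real_of_int p / real q\<bar> < g1 / real q powr (\<tau>+1))"
    if x: "\<alpha> < x" "x < \<alpha> + \<epsilon>" for x
  proof -
    have xab: "x \<in> {a<..<b}" "x \<noteq> \<alpha>" using x aD unfolding \<epsilon>_def by auto
    have xn: "x \<notin> Dset g1 \<tau>"
    proof
      assume "x \<in> Dset g1 \<tau>"
      then have "x \<in> Dset g1 \<tau> \<inter> {a<..<b}" using xab by blast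
      then show False using A1 xab unfolding \<alpha>_def by blast
    qed
    have x01: "0 < x" "x < 1" using x a01 unfolding \<epsilon>_def by auto
    have "\<not> (\<forall>q::nat. q \<ge> 1 \<longrightarrow> g1 / real q powr \<tau> \<le> dist_int (real q * x))"
      using xn x01 unfolding Dset_def by blast
    then obtain q :: nat where q: "q \<ge> 1" "\<not> g1 / real q powr \<tau> \<le> dist_int (real q * x)"
      by blast
    then obtain p :: int where p: "\<bar>real q * x - real_of_int p\<bar> < g1 / real q powr \<tau>"
      using dist_int_less by (meson not_le)
    have "\<bar>x - real_of_int p / real q\<bar> < g1 / real q powr (\<tau>+1)"
      unfolding scale_eq[OF q(1)] using q p by (intro divide_strict_right_mono) auto
    then show ?thesis using q by blast
  qed
  show False using key[OF \<tau> g1 g12 \<epsilon> H1 H2] by blast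
qed

theorem mainTheorem1:
  fixes \<tau> :: real
  assumes "\<tau> > (3 + sqrt 17) / 2"
  shows "AE \<gamma> in lborel. \<gamma> > 0 \<longrightarrow> cantor_set (Dset \<gamma> \<tau>)"
proof -
  have s17: "sqrt 17 > 1" by (rule real_less_rsqrt) simp
  have "(3 + sqrt 17) / 2 > 2" using s17 by (simp add: field_simps)
  then have \<tau>: "\<tau> > 2" using assms by linarith
  define Gam where "Gam a b = {\<gamma>::real. \<gamma> > 0 \<and> (\<exists>\<alpha>. Dset \<gamma> \<tau> \<inter> {a<..<b} = {\<alpha>})}" for a b :: real
  have Gam_single: "g1 = g2" if G: "g1 \<in> Gam a b" "g2 \<in> Gam a b" for a b g1 g2
  proof (rule ccontr)
    assume ne: "g1 \<noteq> g2"
    obtain \<alpha>1 \<alpha>2 where A: "g1 > 0" "Dset g1 \<tau> \<inter> {a<..<b} = {\<alpha>1}" "g2 > 0" "Dset g2 \<tau> \<inter> {a<..<b} = {\<alpha>2}"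
      using G unfolding Gam_def by blast
    show False
    proof (cases "g1 < g2")
      case True show False using Gam_sub[OF \<tau> A(1) True A(2) A(4)] .
    next
      case False
      then have "g2 < g1" using ne by simp
      then show False using Gam_sub[OF \<tau> A(3) _ A(4) A(2)] by blast
    qed
  qed
  have Gam_count: "countable (Gam a b)" for a b
  proof (cases "Gam a b = {}")
    case True then show ?thesis by simp
  next
    case False
    then obtain g where g: "g \<in> Gam a b" by blast
    then have "Gam a b \<subseteq> {g}" using Gam_single by blast
    then show ?thesis using countable_subset by blast
  qed
  define Bad where "Bad = (\<Union>ab\<in>\<rat> \<times> \<rat>. Gam (fst ab) (snd ab))"
  have "countable Bad" unfolding Bad_def
    by (intro countable_UN countable_SIGMA countable_rat Gam_count)
  then have null: "Bad \<in> null_sets lborel" by (rule countable_imp_null_set_lborel)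
  show ?thesis
  proof (rule AE_I'[OF null], rule subsetI)
    fix \<gamma> :: real
    assume "\<gamma> \<in> {\<gamma> \<in> space lborel. \<not> (\<gamma> > 0 \<longrightarrow> cantor_set (Dset \<gamma> \<tau>))}"
    then have g0: "\<gamma> > 0" and nc: "\<not> cantor_set (Dset \<gamma> \<tau>)" by auto
    then have "\<not> perfect_set (Dset \<gamma> \<tau>)"
      unfolding cantor_set_def using Dset_closed[OF g0] Dset_tot_disc[OF g0] by blast
    then obtain \<alpha> where aD: "\<alpha> \<in> Dset \<gamma> \<tau>" and nl: "\<not> \<alpha> islimpt Dset \<gamma> \<tau>"
      unfolding perfect_set_def by blast
    then obtain e where e: "e > 0" "\<And>x. x \<in> Dset \<gamma> \<tau> \<Longrightarrow> x \<noteq> \<alpha> \<Longrightarrow> \<not> dist x \<alpha> < e"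
      unfolding islimpt_approachable by blast
    obtain a where a: "a \<in> \<rat>" "\<alpha> - e < a" "a < \<alpha>" using Rats_dense_in_real[of "\<alpha> - e" \<alpha>] e by auto
    obtain b where b: "b \<in> \<rat>" "\<alpha> < b" "b < \<alpha> + e" using Rats_dense_in_real[of \<alpha> "\<alpha> + e"] e by auto
    have "Dset \<gamma> \<tau> \<inter> {a<..<b} = {\<alpha>}"
    proof
      show "{\<alpha>} \<subseteq> Dset \<gamma> \<tau> \<inter> {a<..<b}" using aD a b by auto
      show "Dset \<gamma> \<tau> \<inter> {a<..<b} \<subseteq> {\<alpha>}"
      proof
        fix x assume x: "x \<in> Dset \<gamma> \<tau> \<inter> {a<..<b}"
        show "x \<in> {\<alpha>}"
        proof (rule ccontr)
          assume "x \<notin> {\<alpha>}"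
          then have "\<not> dist x \<alpha> < e" using e x by auto
          moreover have "dist x \<alpha> < e" using x a b by (auto simp: dist_real_def abs_less_iff)
          ultimately show False by blast
        qed
      qed
    qed
    then have "\<gamma> \<in> Gam a b" unfolding Gam_def using g0 by blast
    moreover have "(a, b) \<in> \<rat> \<times> \<rat>" using a b by blast
    ultimately show "\<gamma> \<in> Bad" unfolding Bad_def by (metis UN_I fst_conv snd_conv)
  qed
qed

end
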